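(* Let $I,I'\subsetneq S$ and let $X,X'\subsetneq S$ with $\tau(I)\subset X$ and $\tau(I')\subset X'$. If $w_Ih_X=w_{I'}h_{X'}$ in $W$, then $I=I'$ and $X=X'$.
   Context: $(W,S)$ is the affine Weyl group of type $\tilde A_{n-1}$ ($n\ge2$), with $S=\{s_i:i\in\mathbb Z/n\mathbb Z\}$ identified with $\mathbb Z/n\mathbb Z$, and $\tau(s_i)=s_{i+1}$ (extended to subsets). For $X\subsetneq S$, choose $\aleph\in S\setminus X$, order $S$ as $\aleph<\aleph+1<\dots<\aleph-1$, write $X=\{x_1<\dots<x_d\}$ and set $h_X=s_{x_d}\cdots s_{x_1}$ (independent of $\aleph$). For $I\subsetneq S$, $w_I$ is the longest element of the finite parabolic subgroup $W_I$. *)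

theory Defs
  imports Main
begin

text \<open>Affine Weyl group of type tilde A_(n-1), realised as the group of affine
permutations of the integers generated by the simple reflections s_i, i in {0..<n}
(indices of S identified with Z/nZ as {0..<n}).\<close>

definition sgen :: "nat \<Rightarrow> nat \<Rightarrow> int \<Rightarrow> int" where
  "sgen n i j = (if j mod int n = int i then j + 1
                 else if j mod int n = int ((i + 1) mod n) then j - 1 else j)"

fun wprod :: "nat \<Rightarrow> nat list \<Rightarrow> int \<Rightarrow> int" where
  "wprod n [] = id"
| "wprod n (a # ws) = sgen n a \<circ> wprod n ws"

definition parab :: "nat \<Rightarrow> nat set \<Rightarrow> (int \<Rightarrow> int) set" where
  "parab n I = {wprod n ws | ws. set ws \<subseteq> I}"

definition clen :: "nat \<Rightarrow> (int \<Rightarrow> int) \<Rightarrow> nat" where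
  "clen n w = (LEAST k. \<exists>ws. length ws = k \<and> set ws \<subseteq> {0..<n} \<and> w = wprod n ws)"

definition longest :: "nat \<Rightarrow> nat set \<Rightarrow> int \<Rightarrow> int" where
  "longest n I = (THE w. w \<in> parab n I \<and> (\<forall>v \<in> parab n I. clen n v \<le> clen n w))"

definition tau :: "nat \<Rightarrow> nat set \<Rightarrow> nat set" where
  "tau n I = (\<lambda>i. (i + 1) mod n) ` I"

text \<open>h_X = s_{x_d} ... s_{x_1}, where x_1 < ... < x_d are the elements of X listed in the
cyclic order aleph < aleph+1 < ... < aleph-1, for aleph chosen as the least element of S - X.\<close>
definition hX :: "nat \<Rightarrow> nat set \<Rightarrow> int \<Rightarrow> int" where
  "hX n X = (let a = Min ({0..<n} - X)
             in wprod n (rev (filter (\<lambda>x. x \<in> X) (map (\<lambda>k. (a + k) mod n) [0..<n]))))"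

end

theory Submission imports Defs begin

definition inA :: "nat \<Rightarrow> nat set \<Rightarrow> int \<Rightarrow> bool" where
  "inA n A c = (nat (c mod int n) \<in> A)"

lemma inA_shift[simp]: "inA n A (c + int n) = inA n A c"
  unfolding inA_def by simp

lemma inA_insert: "n \<ge> 2 \<Longrightarrow> inA n (insert y A) c = (inA n A c \<or> c mod int n = int y)"
  unfolding inA_def by (auto simp: nat_eq_iff)

lemma sgen_alt: "n \<ge> 2 \<Longrightarrow> i < n \<Longrightarrow> sgen n i j =
   (if j mod int n = int i then j + 1 else if (j - 1) mod int n = int i then j - 1 else j)"
proof -
  assume n: "n \<ge> 2" "i < n"
  have "(j mod int n = int ((i + 1) mod n)) = ((j - 1) mod int n = int i)"
  proof -
    have "int ((i + 1) mod n) = (int i + 1) mod int n" by (simp add: zmod_int add.commute)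
    moreover have "(j mod int n = (int i + 1) mod int n) = ((j - 1) mod int n = int i mod int n)"
      by (metis add_diff_cancel_right' diff_add_cancel mod_add_left_eq mod_diff_left_eq)
    moreover have "int i mod int n = int i" using n by simp
    ultimately show ?thesis by simp
  qed
  then show ?thesis unfolding sgen_def by simp
qed

lemma sgen_invol: "n \<ge> 2 \<Longrightarrow> i < n \<Longrightarrow> sgen n i (sgen n i j) = j"
proof -
  assume n: "n \<ge> 2" "i < n"
  have d: "\<And>x. (x + 1) mod int n \<noteq> x mod int n"
  proof
    fix x assume "(x + 1) mod int n = x mod int n"
    then have "int n dvd 1" by (metis add_diff_cancel_left' mod_eq_dvd_iff)
    with n show False by simp
  qed
  show ?thesis
  proof (cases "j mod int n = int i")
    case True
    then have "(j + 1) mod int n \<noteq> int i" using d[of j] by simp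
    then show ?thesis using True by (simp add: sgen_alt[OF n])
  next
    case F1: False
    show ?thesis
    proof (cases "(j - 1) mod int n = int i")
      case True
      then have "(j - 1 + 1) mod int n \<noteq> int i" using d[of "j - 1"] by simp
      then show ?thesis using True F1 by (simp add: sgen_alt[OF n])
    next
      case False
      then show ?thesis using F1 by (simp add: sgen_alt[OF n])
    qed
  qed
qed

lemma sgen_per: "sgen n i (j + int n) = sgen n i j + int n"
  unfolding sgen_def by simp


definition per :: "nat \<Rightarrow> (int \<Rightarrow> int) \<Rightarrow> bool" where
  "per n v = (\<forall>p. v (p + int n) = v p + int n)"

definition cls :: "nat \<Rightarrow> nat set \<Rightarrow> (int \<Rightarrow> int) \<Rightarrow> bool" where
  "cls n I v = (per n v \<and> inj v \<and> (\<forall>c p. \<not> inA n I c \<longrightarrow> (p \<le> c \<longleftrightarrow> v p \<le> c)))"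

definition Win :: "nat \<Rightarrow> nat \<Rightarrow> int set" where
  "Win n a = {int a + 1 .. int a + int n}"

definition Sinv :: "nat \<Rightarrow> nat \<Rightarrow> (int \<Rightarrow> int) \<Rightarrow> (int \<times> int) set" where
  "Sinv n a v = {(p,q). p \<in> Win n a \<and> q \<in> Win n a \<and> p < q \<and> v q < v p}"

definition Pset :: "nat \<Rightarrow> nat \<Rightarrow> nat set \<Rightarrow> (int \<times> int) set" where
  "Pset n a I = {(p,q). p \<in> Win n a \<and> q \<in> Win n a \<and> p < q \<and> (\<forall>c. p \<le> c \<and> c < q \<longrightarrow> inA n I c)}"

lemma wprod_append: "wprod n (xs @ ys) = wprod n xs \<circ> wprod n ys"
  by (induction xs) auto

lemma per_comp: "per n u \<Longrightarrow> per n v \<Longrightarrow> per n (u \<circ> v)"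
  unfolding per_def by simp

lemma per_id: "per n id" unfolding per_def by simp

lemma wprod_per: "per n (wprod n ws)"
  by (induction ws) (auto simp: per_def sgen_per)

lemma sgen_bij: "n \<ge> 2 \<Longrightarrow> i < n \<Longrightarrow> bij (sgen n i)"
  by (rule o_bij[where g = "sgen n i"]) (auto simp: sgen_invol)

lemma wprod_bij: "n \<ge> 2 \<Longrightarrow> set ws \<subseteq> {0..<n} \<Longrightarrow> bij (wprod n ws)"
  by (induction ws) (auto intro: bij_comp sgen_bij)

lemma per_mult_nat: "per n v \<Longrightarrow> v (p + int m * int n) = v p + int m * int n"
proof (induction m)
  case 0 then show ?case by simp
next
  case (Suc m)
  have "v (p + int (Suc m) * int n) = v ((p + int m * int n) + int n)"
    by (simp add: algebra_simps)
  also have "\<dots> = v (p + int m * int n) + int n" using Suc.prems by (simp add: per_def)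
  finally show ?case using Suc by (simp add: algebra_simps)
qed

lemma per_mult: "per n v \<Longrightarrow> v (p + k * int n) = v p + k * int n"
proof (cases "k \<ge> 0")
  case True
  assume "per n v"
  then show ?thesis using per_mult_nat[of n v p "nat k"] True by simp
next
  case False
  assume pv: "per n v"
  define m where "m = nat (- k)"
  have k: "k = - int m" using False m_def by simp
  have "v (p + k * int n + int m * int n) = v (p + k * int n) + int m * int n"
    using per_mult_nat[OF pv] by simp
  then show ?thesis using k by (simp add: algebra_simps)
qed

lemma res_inj:
  assumes n: "n \<ge> 2" and pv: "per n v" and iv: "inj v" and e: "v p mod int n = v q mod int n"
  shows "p mod int n = q mod int n"
proof -
  define k where "k = (v q - v p) div int n"
  have "int n dvd (v q - v p)" using e[symmetric] by (simp add: mod_eq_dvd_iff)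
  then have "v q = v p + k * int n" unfolding k_def by auto
  also have "\<dots> = v (p + k * int n)" using per_mult[OF pv] by simp
  finally have "q = p + k * int n" using iv by (simp add: inj_eq)
  then show ?thesis by simp
qed

lemma win_eq:
  assumes n: "n \<ge> 2" and p: "p \<in> Win n a" and q: "q \<in> Win n a" and e: "p mod int n = q mod int n"
  shows "p = q"
proof -
  have "(p - int a - 1) mod int n = (q - int a - 1) mod int n"
    using e by (metis mod_diff_left_eq)
  moreover have "(p - int a - 1) mod int n = p - int a - 1" using p n by (simp add: Win_def)
  moreover have "(q - int a - 1) mod int n = q - int a - 1" using q n by (simp add: Win_def)
  ultimately show ?thesis by simp
qed

lemma finite_Win: "finite (Win n a)" by (simp add: Win_def)

lemma finite_Sinv: "finite (Sinv n a v)"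
proof -
  have "Sinv n a v \<subseteq> Win n a \<times> Win n a" by (auto simp: Sinv_def)
  then show ?thesis using finite_Win by (meson finite_SigmaI finite_subset)
qed

lemma finite_Pset: "finite (Pset n a I)"
proof -
  have "Pset n a I \<subseteq> Win n a \<times> Win n a" by (auto simp: Pset_def)
  then show ?thesis using finite_Win by (meson finite_SigmaI finite_subset)
qed

lemma sgen_swap:
  assumes n: "n \<ge> 2" "x < n" and ab: "\<alpha> < \<beta>" and s: "sgen n x \<beta> < sgen n x \<alpha>"
  shows "\<alpha> mod int n = int x \<and> \<beta> = \<alpha> + 1"
  using ab s by (auto simp: sgen_alt[OF n] split: if_splits)

lemma lb_step:
  assumes n: "n \<ge> 2" "x < n" and pv: "per n v" and iv: "inj v"
  shows "card (Sinv n a (sgen n x \<circ> v)) \<le> card (Sinv n a v) + 1"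
proof -
  define D where "D = {(p,q). p \<in> Win n a \<and> q \<in> Win n a \<and> v p mod int n = int x \<and> v q = v p + 1}"
  have sub: "Sinv n a (sgen n x \<circ> v) \<subseteq> Sinv n a v \<union> D"
  proof
    fix u assume u: "u \<in> Sinv n a (sgen n x \<circ> v)"
    obtain p q where pq: "u = (p,q)" by fastforce
    show "u \<in> Sinv n a v \<union> D"
    proof (cases "v q < v p")
      case True then show ?thesis using u pq by (auto simp: Sinv_def)
    next
      case False
      have "p < q" using u pq by (auto simp: Sinv_def)
      then have "v p \<noteq> v q" using iv by (metis inj_eq less_irrefl)
      with False have "v p < v q" by simp
      moreover have "sgen n x (v q) < sgen n x (v p)" using u pq by (auto simp: Sinv_def)
      ultimately have "v p mod int n = int x \<and> v q = v p + 1" using sgen_swap[OF n] by blast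
      then show ?thesis using u pq by (auto simp: Sinv_def D_def)
    qed
  qed
  have fD: "finite D"
  proof -
    have "D \<subseteq> Win n a \<times> Win n a" by (auto simp: D_def)
    then show ?thesis using finite_Win by (meson finite_SigmaI finite_subset)
  qed
  have cD: "card D \<le> 1"
  proof -
    have "\<forall>u\<in>D. \<forall>u'\<in>D. u = u'"
    proof (intro ballI)
      fix u u' assume u: "u \<in> D" and u': "u' \<in> D"
      obtain p q where pq: "u = (p,q)" by fastforce
      obtain p' q' where pq': "u' = (p',q')" by fastforce
      have "v p mod int n = v p' mod int n" using u u' pq pq' by (auto simp: D_def)
      then have "p mod int n = p' mod int n" using res_inj[OF n(1) pv iv] by blast
      then have "p = p'" using win_eq[OF n(1)] u u' pq pq' by (auto simp: D_def)
      moreover have "v q = v q'" using u u' pq pq' \<open>p = p'\<close> by (auto simp: D_def)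
      then have "q = q'" using iv by (simp add: inj_eq)
      ultimately show "u = u'" using pq pq' by simp
    qed
    then show ?thesis using fD by (simp add: card_le_Suc0_iff_eq)
  qed
  have "card (Sinv n a (sgen n x \<circ> v)) \<le> card (Sinv n a v \<union> D)"
    using sub by (intro card_mono) (auto simp: finite_Sinv fD)
  also have "\<dots> \<le> card (Sinv n a v) + card D" by (rule card_Un_le)
  finally show ?thesis using cD by simp
qed

lemma lb_words: "n \<ge> 2 \<Longrightarrow> set ws \<subseteq> {0..<n} \<Longrightarrow> card (Sinv n a (wprod n ws)) \<le> length ws"
proof (induction ws)
  case Nil
  have "Sinv n a id = {}" by (auto simp: Sinv_def)
  then show ?case by (simp add: id_def)
next
  case (Cons x ws)
  have b: "bij (wprod n ws)" using wprod_bij Cons.prems by simp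
  have "card (Sinv n a (sgen n x \<circ> wprod n ws)) \<le> card (Sinv n a (wprod n ws)) + 1"
    using Cons.prems by (intro lb_step) (auto simp: wprod_per bij_is_inj[OF b])
  moreover have "card (Sinv n a (wprod n ws)) \<le> length ws" using Cons by simp
  ultimately show ?case by (simp add: o_def)
qed

lemma clen_ge:
  assumes n: "n \<ge> 2" and ws: "set ws \<subseteq> {0..<n}"
  shows "card (Sinv n a (wprod n ws)) \<le> clen n (wprod n ws)"
proof -
  have ex: "\<exists>k ws'. length ws' = k \<and> set ws' \<subseteq> {0..<n} \<and> wprod n ws = wprod n ws'"
    using ws by blast
  have "\<exists>ws'. length ws' = clen n (wprod n ws) \<and> set ws' \<subseteq> {0..<n} \<and> wprod n ws = wprod n ws'"
    unfolding clen_def by (rule LeastI_ex) (use ex in blast)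
  then obtain ws' where w': "length ws' = clen n (wprod n ws)" "set ws' \<subseteq> {0..<n}" "wprod n ws = wprod n ws'"
    by blast
  then show ?thesis using lb_words[OF n w'(2), of a] by simp
qed

lemma clen_le:
  "set ws \<subseteq> {0..<n} \<Longrightarrow> clen n (wprod n ws) \<le> length ws"
  unfolding clen_def by (rule Least_le) blast


lemma cls_comp: "cls n I u \<Longrightarrow> cls n I v \<Longrightarrow> cls n I (u \<circ> v)"
proof -
  assume u: "cls n I u" and v: "cls n I v"
  have "per n (u \<circ> v)" using u v unfolding cls_def by (blast intro: per_comp)
  moreover have "inj (u \<circ> v)" using u v unfolding cls_def by (blast intro: inj_compose)
  moreover have "\<forall>c p. \<not> inA n I c \<longrightarrow> (p \<le> c \<longleftrightarrow> (u \<circ> v) p \<le> c)"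
  proof (intro allI impI)
    fix c p assume c: "\<not> inA n I c"
    have "(p \<le> c) = (v p \<le> c)" using v c unfolding cls_def by blast
    also have "\<dots> = (u (v p) \<le> c)" using u c unfolding cls_def by blast
    finally show "(p \<le> c) = ((u \<circ> v) p \<le> c)" by simp
  qed
  ultimately show ?thesis unfolding cls_def by blast
qed

lemma cls_id: "cls n I id" unfolding cls_def per_def by simp

lemma cls_sgen:
  assumes n: "n \<ge> 2" and i: "i \<in> I" and I: "I \<subseteq> {0..<n}"
  shows "cls n I (sgen n i)"
proof -
  have iN: "i < n" using i I by auto
  have cut: "(p \<le> c) = (sgen n i p \<le> c)" if c: "\<not> inA n I c" for c p
  proof -
    have 1: "p mod int n = int i \<Longrightarrow> p \<noteq> c" using c i unfolding inA_def by auto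
    have 2: "(p - 1) mod int n = int i \<Longrightarrow> p - 1 \<noteq> c" using c i unfolding inA_def by auto
    show ?thesis
    proof (cases "p mod int n = int i")
      case True
      then have "sgen n i p = p + 1" by (simp add: sgen_alt[OF n iN])
      moreover have "p \<noteq> c" using 1 True by blast
      ultimately show ?thesis by auto
    next
      case F: False
      show ?thesis
      proof (cases "(p - 1) mod int n = int i")
        case True
        then have "sgen n i p = p - 1" using F by (simp add: sgen_alt[OF n iN])
        moreover have "p - 1 \<noteq> c" using 2 True by blast
        ultimately show ?thesis by auto
      next
        case False
        then show ?thesis using F by (simp add: sgen_alt[OF n iN])
      qed
    qed
  qed
  have "per n (sgen n i)" unfolding per_def using sgen_per[of n i] by blast
  moreover have "inj (sgen n i)" using bij_is_inj[OF sgen_bij[OF n iN]] .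
  ultimately show ?thesis unfolding cls_def using cut by blast
qed

lemma wprod_cls: "n \<ge> 2 \<Longrightarrow> I \<subseteq> {0..<n} \<Longrightarrow> set ws \<subseteq> I \<Longrightarrow> cls n I (wprod n ws)"
proof (induction ws)
  case Nil then show ?case using cls_id by (simp add: id_def)
next
  case (Cons x ws)
  then have "cls n I (sgen n x)" "cls n I (wprod n ws)" using cls_sgen by auto
  then have "cls n I (sgen n x \<circ> wprod n ws)" by (rule cls_comp)
  then show ?case by (simp only: wprod.simps)
qed

lemma notinA_a: "a < n \<Longrightarrow> a \<notin> I \<Longrightarrow> \<not> inA n I (int a)"
  unfolding inA_def by simp

lemma notinA_an: "a < n \<Longrightarrow> a \<notin> I \<Longrightarrow> \<not> inA n I (int a + int n)"
  using notinA_a inA_shift by metis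


lemma win_pres:
  assumes v: "cls n I v" and a: "a < n" "a \<notin> I" and p: "p \<in> Win n a"
  shows "v p \<in> Win n a"
proof -
  have c: "\<And>c p. \<not> inA n I c \<Longrightarrow> (p \<le> c) = (v p \<le> c)" using v unfolding cls_def by blast
  have "\<not> v p \<le> int a" using c[OF notinA_a[OF a]] p by (auto simp: Win_def)
  moreover have "v p \<le> int a + int n" using c[OF notinA_an[OF a]] p by (auto simp: Win_def)
  ultimately show ?thesis by (auto simp: Win_def)
qed

lemma incr_id:
  assumes n: "n \<ge> 2" and v: "cls n I v" and a: "a < n" "a \<notin> I"
    and inc: "\<forall>p\<in>Win n a. \<forall>q\<in>Win n a. p < q \<longrightarrow> v p < v q"
  shows "v = id"
proof -
  have lo: "k < n \<longrightarrow> v (int a + 1 + int k) \<ge> int a + 1 + int k" for k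
  proof (induction k)
    case 0
    have "int a + 1 \<in> Win n a" using n by (auto simp: Win_def)
    then show ?case using win_pres[OF v a] by (auto simp: Win_def)
  next
    case (Suc k)
    show ?case
    proof
      assume k: "Suc k < n"
      have "v (int a + 1 + int k) < v (int a + 1 + int (Suc k))"
        using inc k by (auto simp: Win_def)
      then show "v (int a + 1 + int (Suc k)) \<ge> int a + 1 + int (Suc k)" using Suc k by simp
    qed
  qed
  have hi: "k < n \<longrightarrow> v (int a + int n - int k) \<le> int a + int n - int k" for k
  proof (induction k)
    case 0
    have "int a + int n \<in> Win n a" using n by (auto simp: Win_def)
    then show ?case using win_pres[OF v a] by (auto simp: Win_def)
  next
    case (Suc k)
    show ?case
    proof
      assume k: "Suc k < n"
      have "v (int a + int n - int (Suc k)) < v (int a + int n - int k)"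
        using inc k by (auto simp: Win_def)
      then show "v (int a + int n - int (Suc k)) \<le> int a + int n - int (Suc k)" using Suc k by simp
    qed
  qed
  have onW: "v p = p" if p: "p \<in> Win n a" for p
  proof -
    have "v p \<ge> p" using lo[of "nat (p - int a - 1)"] p by (auto simp: Win_def)
    moreover have "v p \<le> p" using hi[of "nat (int a + int n - p)"] p by (auto simp: Win_def)
    ultimately show ?thesis by simp
  qed
  have "v p = p" for p
  proof -
    define p0 where "p0 = int a + 1 + (p - int a - 1) mod int n"
    define k where "k = (p - int a - 1) div int n"
    have b1: "0 \<le> (p - int a - 1) mod int n" "(p - int a - 1) mod int n < int n" using n by simp_all
    have p0W: "p0 \<in> Win n a" using b1 unfolding p0_def Win_def by simp
    have pp: "p = p0 + k * int n" unfolding p0_def k_def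
      using div_mult_mod_eq[of "p - int a - 1" "int n"] by (simp add: algebra_simps)
    have "per n v" using v by (simp add: cls_def)
    then have "v p = v p0 + k * int n" using pp per_mult by metis
    then show ?thesis using onW[OF p0W] pp by simp
  qed
  then show ?thesis by auto
qed

lemma incr_chain:
  fixes v :: "int \<Rightarrow> int"
  assumes iv: "inj v" and st: "\<forall>p. p \<in> Win n a \<and> p + 1 \<in> Win n a \<longrightarrow> \<not> v (p + 1) < v p"
  shows "\<forall>p\<in>Win n a. \<forall>q\<in>Win n a. p < q \<longrightarrow> v p < v q"
proof -
  have step: "v p < v (p + 1)" if h: "p \<in> Win n a" "p + 1 \<in> Win n a" for p
  proof -
    have "\<not> v (p + 1) < v p" using st h by blast
    moreover have "v p \<noteq> v (p + 1)" by (simp add: inj_eq[OF iv])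
    ultimately show ?thesis by linarith
  qed
  have all: "\<forall>p. p \<in> Win n a \<longrightarrow> p + int k + 1 \<in> Win n a \<longrightarrow> v p < v (p + int k + 1)" for k
  proof (induction k)
    case 0 then show ?case using step by simp
  next
    case (Suc k)
    show ?case
    proof (intro allI impI)
      fix p assume p: "p \<in> Win n a" "p + int (Suc k) + 1 \<in> Win n a"
      have e: "p + int (Suc k) + 1 = p + int k + 1 + 1" by simp
      have m: "p + int k + 1 \<in> Win n a" using p unfolding Win_def by simp
      have m2: "p + int k + 1 + 1 \<in> Win n a" using p(2) e by metis
      have "v p < v (p + int k + 1)" using Suc.IH p(1) m by blast
      also have "\<dots> < v (p + int k + 1 + 1)" using step[OF m m2] .
      finally show "v p < v (p + int (Suc k) + 1)" using e by metis
    qed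
  qed
  show ?thesis
  proof (intro ballI impI)
    fix p q assume p: "p \<in> Win n a" and q: "q \<in> Win n a" and pq: "p < q"
    define k where "k = nat (q - p - 1)"
    have "q = p + int k + 1" using pq unfolding k_def by simp
    then show "v p < v q" using all[of k] p q by simp
  qed
qed


lemma desc_exists:
  assumes v: "cls n I v" and ne: "Sinv n a v \<noteq> {}"
  shows "\<exists>p. p \<in> Win n a \<and> p + 1 \<in> Win n a \<and> v (p + 1) < v p"
proof (rule ccontr)
  assume "\<not> ?thesis"
  then have st: "\<forall>p. p \<in> Win n a \<and> p + 1 \<in> Win n a \<longrightarrow> \<not> v (p + 1) < v p" by blast
  have "inj v" using v by (simp add: cls_def)
  from incr_chain[OF this st] have "Sinv n a v = {}" unfolding Sinv_def by fastforce
  with ne show False by simp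
qed

lemma sgen_on_win:
  assumes n: "n \<ge> 2" and p: "p \<in> Win n a" "p + 1 \<in> Win n a" and i: "int i = p mod int n"
    and iN: "i < n" and x: "x \<in> Win n a"
  shows "sgen n i x = (if x = p then p + 1 else if x = p + 1 then p else x)"
proof -
  have 1: "(x mod int n = int i) = (x = p)"
  proof
    assume "x mod int n = int i"
    then show "x = p" using win_eq[OF n x p(1)] i by simp
  qed (use i in simp)
  have 2: "((x - 1) mod int n = int i) = (x = p + 1)"
  proof
    assume "(x - 1) mod int n = int i"
    then have "(x - 1) mod int n = p mod int n" using i by simp
    then have "(x - 1 + 1) mod int n = (p + 1) mod int n" by (metis mod_add_left_eq)
    then show "x = p + 1" using win_eq[OF n x p(2)] by simp
  qed (use i in simp)
  show ?thesis using 1 2 by (simp add: sgen_alt[OF n iN])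
qed

lemma ub:
  assumes n: "n \<ge> 2" and I: "I \<subseteq> {0..<n}" and a: "a < n" "a \<notin> I"
  shows "cls n I v \<Longrightarrow> \<exists>ws. set ws \<subseteq> I \<and> length ws \<le> card (Sinv n a v) \<and> v = wprod n ws"
proof (induction "card (Sinv n a v)" arbitrary: v rule: less_induct)
  case less
  note v = less.prems
  show ?case
  proof (cases "Sinv n a v = {}")
    case True
    have "inj v" using v by (simp add: cls_def)
    have "\<forall>p\<in>Win n a. \<forall>q\<in>Win n a. p < q \<longrightarrow> v p < v q"
    proof (intro ballI impI)
      fix p q assume pq: "p \<in> Win n a" "q \<in> Win n a" "p < q"
      have "(p, q) \<notin> Sinv n a v" using True by simp
      then have "\<not> v q < v p" using pq unfolding Sinv_def by simp
      moreover have "v p \<noteq> v q" using pq(3) \<open>inj v\<close> by (simp add: inj_eq)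
      ultimately show "v p < v q" by linarith
    qed
    then have "v = id" using incr_id[OF n v a] by blast
    then show ?thesis by (intro exI[of _ "[]"]) auto
  next
    case False
    obtain p where p: "p \<in> Win n a" "p + 1 \<in> Win n a" "v (p + 1) < v p"
      using desc_exists[OF v False] by blast
    have cut: "\<And>c q. \<not> inA n I c \<Longrightarrow> (q \<le> c) = (v q \<le> c)" using v unfolding cls_def by blast
    have pin: "inA n I p"
    proof (rule ccontr)
      assume "\<not> inA n I p"
      from cut[OF this, of p] cut[OF this, of "p + 1"] have "v p \<le> p" "\<not> v (p + 1) \<le> p" by auto
      with p(3) show False by simp
    qed
    define i where "i = nat (p mod int n)"
    have iI: "i \<in> I" using pin unfolding inA_def i_def .
    have iN: "i < n" using iI I by auto
    have ii: "int i = p mod int n" unfolding i_def using n by simp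
    define s where "s = sgen n i"
    have sf: "\<And>x. x \<in> Win n a \<Longrightarrow> s x = (if x = p then p + 1 else if x = p + 1 then p else x)"
      unfolding s_def using sgen_on_win[OF n p(1) p(2) ii iN] by blast
    have sW: "\<And>x. x \<in> Win n a \<Longrightarrow> s x \<in> Win n a" using sf p by auto
    have ss: "s (s x) = x" for x unfolding s_def using sgen_invol[OF n iN] by simp
    define v' where "v' = v \<circ> s"
    have v': "cls n I v'" unfolding v'_def s_def using cls_comp[OF v cls_sgen[OF n iI I]] .
    define \<phi> where "\<phi> = (\<lambda>(x::int, y::int). (s x, s y))"
    have img: "\<phi> ` Sinv n a v' \<subseteq> Sinv n a v - {(p, p + 1)}"
    proof
      fix u assume "u \<in> \<phi> ` Sinv n a v'"
      then obtain x y where xy: "(x, y) \<in> Sinv n a v'" and u: "u = (s x, s y)"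
        unfolding \<phi>_def by auto
      have x: "x \<in> Win n a" and y: "y \<in> Win n a" and xly: "x < y" and vv: "v (s y) < v (s x)"
        using xy unfolding Sinv_def v'_def by auto
      have "s x < s y \<and> (s x, s y) \<noteq> (p, p + 1)"
        using sf[OF x] sf[OF y] xly vv p(3) by (auto split: if_splits)
      then show "u \<in> Sinv n a v - {(p, p + 1)}"
        using u sW[OF x] sW[OF y] vv unfolding Sinv_def by auto
    qed
    have injphi: "inj_on \<phi> (Sinv n a v')"
    proof (rule inj_onI)
      fix u u' assume "u \<in> Sinv n a v'" "u' \<in> Sinv n a v'" and e: "\<phi> u = \<phi> u'"
      obtain x y where u: "u = (x, y)" by fastforce
      obtain x' y' where u': "u' = (x', y')" by fastforce
      have "s x = s x'" "s y = s y'" using e unfolding u u' \<phi>_def by auto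
      then have "s (s x) = s (s x')" "s (s y) = s (s y')" by simp_all
      then show "u = u'" unfolding u u' using ss by simp
    qed
    have pp: "(p, p + 1) \<in> Sinv n a v" using p unfolding Sinv_def by auto
    have "card (Sinv n a v') = card (\<phi> ` Sinv n a v')" using card_image[OF injphi] by simp
    also have "\<dots> \<le> card (Sinv n a v - {(p, p + 1)})"
      using img by (intro card_mono) (auto simp: finite_Sinv)
    also have "\<dots> < card (Sinv n a v)" using pp finite_Sinv
      by (metis card_Diff1_less)
    finally have lt: "card (Sinv n a v') < card (Sinv n a v)" .
    obtain ws where ws: "set ws \<subseteq> I" "length ws \<le> card (Sinv n a v')" "v' = wprod n ws"
      using less.hyps[OF lt v'] by blast
    have "wprod n (ws @ [i]) = v' \<circ> s" using ws(3) unfolding s_def by (simp add: wprod_append)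
    also have "\<dots> = v" unfolding v'_def using ss by auto
    finally show ?thesis using ws iI lt by (intro exI[of _ "ws @ [i]"]) auto
  qed
qed


definition up :: "nat \<Rightarrow> nat set \<Rightarrow> int \<Rightarrow> nat" where
  "up n I p = (LEAST k. \<not> inA n I (p + int k))"

definition dn :: "nat \<Rightarrow> nat set \<Rightarrow> int \<Rightarrow> nat" where
  "dn n I p = (LEAST k. \<not> inA n I (p - 1 - int k))"

definition rv :: "nat \<Rightarrow> nat set \<Rightarrow> int \<Rightarrow> int" where
  "rv n I p = p + int (up n I p) - int (dn n I p)"

lemma inA_mod: "n \<ge> 2 \<Longrightarrow> x mod int n = int a \<Longrightarrow> a \<notin> I \<Longrightarrow> \<not> inA n I x"
  unfolding inA_def by simp

lemma ex_up:
  assumes n: "n \<ge> 2" and a: "a < n" "a \<notin> I"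
  shows "\<exists>k. \<not> inA n I (p + int k)"
proof -
  define k where "k = nat ((int a - p) mod int n)"
  have "int k = (int a - p) mod int n" unfolding k_def using n by simp
  then have "(p + int k) mod int n = (p + (int a - p)) mod int n" by (simp add: mod_add_right_eq)
  also have "\<dots> = int a" using a by simp
  finally show ?thesis using inA_mod[OF n _ a(2)] by blast
qed

lemma ex_dn:
  assumes n: "n \<ge> 2" and a: "a < n" "a \<notin> I"
  shows "\<exists>k. \<not> inA n I (p - 1 - int k)"
proof -
  define k where "k = nat ((p - 1 - int a) mod int n)"
  have "int k = (p - 1 - int a) mod int n" unfolding k_def using n by simp
  then have "(p - 1 - int k) mod int n = (p - 1 - (p - 1 - int a)) mod int n" by (simp add: mod_diff_right_eq)
  also have "\<dots> = int a" using a by simp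
  finally show ?thesis using inA_mod[OF n _ a(2)] by blast
qed

context
  fixes n :: nat and I :: "nat set" and a :: nat
  assumes n: "n \<ge> 2" and a: "a < n" "a \<notin> I"
begin

lemma up_spec: "\<not> inA n I (p + int (up n I p))"
  unfolding up_def by (rule LeastI_ex) (rule ex_up[OF n a])

lemma dn_spec: "\<not> inA n I (p - 1 - int (dn n I p))"
  unfolding dn_def by (rule LeastI_ex) (rule ex_dn[OF n a])

lemma up_le: "\<not> inA n I (p + int k) \<Longrightarrow> up n I p \<le> k"
  unfolding up_def by (rule Least_le)

lemma dn_le: "\<not> inA n I (p - 1 - int k) \<Longrightarrow> dn n I p \<le> k"
  unfolding dn_def by (rule Least_le)

lemma up_step: "inA n I p \<Longrightarrow> up n I p = Suc (up n I (p + 1))"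
proof -
  assume p: "inA n I p"
  have "up n I p = Suc (LEAST m. \<not> inA n I (p + int (Suc m)))"
    unfolding up_def by (rule Least_Suc) (use up_spec[of p] p in \<open>auto simp: up_def\<close>)
  moreover have "(\<lambda>m. \<not> inA n I (p + int (Suc m))) = (\<lambda>m. \<not> inA n I (p + 1 + int m))"
    by (rule ext) (simp add: add.assoc)
  ultimately show ?thesis unfolding up_def by simp
qed

lemma dn_step: "inA n I p \<Longrightarrow> dn n I (p + 1) = Suc (dn n I p)"
proof -
  assume p: "inA n I p"
  have "dn n I (p + 1) = Suc (LEAST m. \<not> inA n I (p + 1 - 1 - int (Suc m)))"
    unfolding dn_def by (rule Least_Suc) (use dn_spec[of "p + 1"] p in \<open>auto simp: dn_def\<close>)
  moreover have "(\<lambda>m. \<not> inA n I (p + 1 - 1 - int (Suc m))) = (\<lambda>m. \<not> inA n I (p - 1 - int m))"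
    by (rule ext) (simp add: algebra_simps)
  ultimately show ?thesis unfolding dn_def by simp
qed

lemma rv_step: "inA n I p \<Longrightarrow> rv n I p = rv n I (p + 1) + 1"
  unfolding rv_def using up_step dn_step by simp

lemma up_per: "up n I (p + int n) = up n I p"
proof -
  have "(\<lambda>k. \<not> inA n I (p + int n + int k)) = (\<lambda>k. \<not> inA n I (p + int k))"
  proof (rule ext)
    fix k
    have "p + int n + int k = (p + int k) + int n" by simp
    then show "(\<not> inA n I (p + int n + int k)) = (\<not> inA n I (p + int k))" using inA_shift by metis
  qed
  then show ?thesis unfolding up_def by simp
qed

lemma dn_per: "dn n I (p + int n) = dn n I p"
proof -
  have "(\<lambda>k. \<not> inA n I (p + int n - 1 - int k)) = (\<lambda>k. \<not> inA n I (p - 1 - int k))"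
  proof (rule ext)
    fix k
    have "p + int n - 1 - int k = (p - 1 - int k) + int n" by simp
    then show "(\<not> inA n I (p + int n - 1 - int k)) = (\<not> inA n I (p - 1 - int k))" using inA_shift by metis
  qed
  then show ?thesis unfolding dn_def by simp
qed

lemma rv_per: "per n (rv n I)"
  unfolding per_def rv_def using up_per dn_per by simp

lemma rv_cut: "\<not> inA n I c \<Longrightarrow> (p \<le> c) = (rv n I p \<le> c)"
proof -
  assume c: "\<not> inA n I c"
  show ?thesis
  proof (cases "p \<le> c")
    case True
    have "p + int (nat (c - p)) = c" using True by simp
    then have "up n I p \<le> nat (c - p)" using c up_le by metis
    then have "rv n I p \<le> c" unfolding rv_def using True by linarith
    then show ?thesis using True by simp
  next
    case False
    have "p - 1 - int (nat (p - 1 - c)) = c" using False by simp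
    then have "dn n I p \<le> nat (p - 1 - c)" using c dn_le by metis
    then have "\<not> rv n I p \<le> c" unfolding rv_def using False by linarith
    then show ?thesis using False by simp
  qed
qed

lemma rv_blk: "(\<forall>c. p \<le> c \<and> c < p + int k \<longrightarrow> inA n I c) \<Longrightarrow> rv n I (p + int k) = rv n I p - int k"
proof (induction k)
  case 0 then show ?case by simp
next
  case (Suc k)
  have h: "inA n I (p + int k)" using Suc.prems by simp
  have "rv n I (p + int k) = rv n I (p + int k + 1) + 1" using rv_step[OF h] .
  moreover have "rv n I (p + int k) = rv n I p - int k" using Suc by simp
  moreover have e: "p + int (Suc k) = p + int k + 1" by simp
  ultimately show ?case by (simp only: e)
qed

lemma rv_dec: "p < q \<Longrightarrow> (\<forall>c. p \<le> c \<and> c < q \<longrightarrow> inA n I c) \<Longrightarrow> rv n I q < rv n I p"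
proof -
  assume pq: "p < q" and h: "\<forall>c. p \<le> c \<and> c < q \<longrightarrow> inA n I c"
  define k where "k = nat (q - p)"
  have q: "q = p + int k" "k > 0" using pq unfolding k_def by simp_all
  show ?thesis using rv_blk[of p k] h q by simp
qed

lemma rv_inj: "inj (rv n I)"
proof (rule injI)
  have *: "rv n I p \<noteq> rv n I q" if pq: "p < q" for p q
  proof (cases "\<forall>c. p \<le> c \<and> c < q \<longrightarrow> inA n I c")
    case True then show ?thesis using rv_dec[OF pq] by simp
  next
    case False
    then obtain c where c: "p \<le> c" "c < q" "\<not> inA n I c" by blast
    have "rv n I p \<le> c" using rv_cut[OF c(3), of p] c by simp
    moreover have "\<not> rv n I q \<le> c" using rv_cut[OF c(3), of q] c by simp
    ultimately show ?thesis by auto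
  qed
  fix p q assume "rv n I p = rv n I q"
  then show "p = q" using *[of p q] *[of q p] by (metis linorder_neqE)
qed

lemma cls_rv: "cls n I (rv n I)"
  unfolding cls_def using rv_per rv_inj rv_cut by blast

lemma Sinv_sub: "cls n I v \<Longrightarrow> Sinv n a v \<subseteq> Pset n a I"
proof
  fix u assume v: "cls n I v" and u: "u \<in> Sinv n a v"
  obtain p q where pq: "u = (p, q)" by fastforce
  have h: "p \<in> Win n a" "q \<in> Win n a" "p < q" "v q < v p" using u pq unfolding Sinv_def by auto
  have "inA n I c" if c: "p \<le> c" "c < q" for c
  proof (rule ccontr)
    assume nc: "\<not> inA n I c"
    have "v p \<le> c" using v nc c unfolding cls_def by blast
    moreover have "\<not> v q \<le> c" using v nc c unfolding cls_def by (meson not_le)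
    ultimately show False using h by simp
  qed
  then show "u \<in> Pset n a I" using h pq unfolding Pset_def by auto
qed

lemma Sinv_rv: "Sinv n a (rv n I) = Pset n a I"
proof
  show "Sinv n a (rv n I) \<subseteq> Pset n a I" using Sinv_sub[OF cls_rv] .
  show "Pset n a I \<subseteq> Sinv n a (rv n I)"
    unfolding Pset_def Sinv_def using rv_dec by auto
qed

lemma comp_incr:
  assumes u: "cls n I u" and v: "cls n I v" and su: "Sinv n a u = Pset n a I" and sv: "Sinv n a v = Pset n a I"
  shows "\<forall>p\<in>Win n a. \<forall>q\<in>Win n a. p < q \<longrightarrow> v (u p) < v (u q)"
proof (intro ballI impI)
  fix p q assume p: "p \<in> Win n a" and q: "q \<in> Win n a" and pq: "p < q"
  have cu: "\<And>c x. \<not> inA n I c \<Longrightarrow> (x \<le> c) = (u x \<le> c)" using u unfolding cls_def by blast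
  have cv: "\<And>c x. \<not> inA n I c \<Longrightarrow> (x \<le> c) = (v x \<le> c)" using v unfolding cls_def by blast
  show "v (u p) < v (u q)"
  proof (cases "\<forall>c. p \<le> c \<and> c < q \<longrightarrow> inA n I c")
    case False
    then obtain c where c: "p \<le> c" "c < q" "\<not> inA n I c" by blast
    have "v (u p) \<le> c" using cu[OF c(3), of p] cv[OF c(3), of "u p"] c by simp
    moreover have "\<not> v (u q) \<le> c" using cu[OF c(3), of q] cv[OF c(3), of "u q"] c by simp
    ultimately show ?thesis by simp
  next
    case True
    then have "(p, q) \<in> Pset n a I" using p q pq unfolding Pset_def by auto
    then have uqp: "u q < u p" using su unfolding Sinv_def by auto
    have upW: "u p \<in> Win n a" "u q \<in> Win n a" using win_pres[OF u a] p q by auto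
    have "inA n I c" if c: "u q \<le> c" "c < u p" for c
    proof (rule ccontr)
      assume nc: "\<not> inA n I c"
      have "q \<le> c" using cu[OF nc, of q] c by simp
      moreover have "\<not> p \<le> c" using cu[OF nc, of p] c by simp
      ultimately show False using pq by simp
    qed
    then have "(u q, u p) \<in> Pset n a I" using upW uqp unfolding Pset_def by auto
    then show ?thesis using sv unfolding Sinv_def by auto
  qed
qed

lemma rv_invol: "rv n I (rv n I p) = p"
proof -
  have "rv n I \<circ> rv n I = id"
    using incr_id[OF n cls_comp[OF cls_rv cls_rv] a] comp_incr[OF cls_rv cls_rv Sinv_rv Sinv_rv] by simp
  then have "(rv n I \<circ> rv n I) p = id p" by (simp only:)
  then show ?thesis by simp
qed

lemma longest_eq:
  assumes I: "I \<subseteq> {0..<n}"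
  shows "longest n I = rv n I"
proof -
  have fin: "finite (Pset n a I)" by (rule finite_Pset)
  have clen_ub: "clen n v \<le> card (Sinv n a v)" if v: "v \<in> parab n I" for v
  proof -
    obtain ws0 where ws0: "set ws0 \<subseteq> I" "v = wprod n ws0" using v unfolding parab_def by blast
    have cv: "cls n I v" using wprod_cls[OF n I ws0(1)] ws0(2) by simp
    obtain ws where ws: "set ws \<subseteq> I" "length ws \<le> card (Sinv n a v)" "v = wprod n ws"
      using ub[OF n I a cv] by blast
    have "clen n v \<le> length ws" using clen_le[of ws n] ws I by auto
    then show ?thesis using ws by simp
  qed
  have clen_lb: "card (Sinv n a v) \<le> clen n v" if v: "v \<in> parab n I" for v
  proof -
    obtain ws0 where ws0: "set ws0 \<subseteq> I" "v = wprod n ws0" using v unfolding parab_def by blast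
    show ?thesis using clen_ge[OF n, of ws0 a] ws0 I by auto
  qed
  have cls_par: "cls n I v" if v: "v \<in> parab n I" for v
  proof -
    obtain ws0 where ws0: "set ws0 \<subseteq> I" "v = wprod n ws0" using v unfolding parab_def by blast
    show ?thesis using wprod_cls[OF n I ws0(1)] ws0(2) by simp
  qed
  have rvP: "rv n I \<in> parab n I"
  proof -
    obtain ws where ws: "set ws \<subseteq> I" "length ws \<le> card (Sinv n a (rv n I))" "rv n I = wprod n ws"
      using ub[OF n I a cls_rv] by blast
    then show ?thesis unfolding parab_def by blast
  qed
  have le_card: "card (Sinv n a v) \<le> card (Pset n a I)" if v: "v \<in> parab n I" for v
    using card_mono[OF fin Sinv_sub[OF cls_par[OF v]]] .
  have rvmax: "clen n v \<le> clen n (rv n I)" if v: "v \<in> parab n I" for v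
  proof -
    have "clen n v \<le> card (Sinv n a v)" by (rule clen_ub[OF v])
    also have "\<dots> \<le> card (Pset n a I)" by (rule le_card[OF v])
    also have "\<dots> = card (Sinv n a (rv n I))" using Sinv_rv by simp
    also have "\<dots> \<le> clen n (rv n I)" by (rule clen_lb[OF rvP])
    finally show ?thesis .
  qed
  have uniq: "w = rv n I" if w: "w \<in> parab n I" "\<forall>v\<in>parab n I. clen n v \<le> clen n w" for w
  proof -
    have "card (Pset n a I) = card (Sinv n a (rv n I))" using Sinv_rv by simp
    also have "\<dots> \<le> clen n (rv n I)" by (rule clen_lb[OF rvP])
    also have "\<dots> \<le> clen n w" using w(2) rvP by blast
    also have "\<dots> \<le> card (Sinv n a w)" by (rule clen_ub[OF w(1)])
    finally have "card (Pset n a I) \<le> card (Sinv n a w)" .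
    then have sw: "Sinv n a w = Pset n a I"
      using card_seteq[OF fin Sinv_sub[OF cls_par[OF w(1)]]] by blast
    have cw: "cls n I w" by (rule cls_par[OF w(1)])
    have "w \<circ> rv n I = id"
      using incr_id[OF n cls_comp[OF cw cls_rv] a] comp_incr[OF cls_rv cw Sinv_rv sw] by simp
    have wr: "w (rv n I x) = x" for x
    proof -
      have "(w \<circ> rv n I) x = id x" by (simp only: \<open>w \<circ> rv n I = id\<close>)
      then show ?thesis by simp
    qed
    show ?thesis
    proof (rule ext)
      fix p
      have "w p = w (rv n I (rv n I p))" by (simp only: rv_invol)
      also have "\<dots> = rv n I p" by (rule wr)
      finally show "w p = rv n I p" .
    qed
  qed
  show ?thesis unfolding longest_def
  proof (rule the_equality)
    show "rv n I \<in> parab n I \<and> (\<forall>v\<in>parab n I. clen n v \<le> clen n (rv n I))"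
      using rvP rvmax by blast
  next
    fix w assume "w \<in> parab n I \<and> (\<forall>v\<in>parab n I. clen n v \<le> clen n w)"
    then show "w = rv n I" using uniq by blast
  qed
qed

end


lemma mod_succ: "(x::int) mod m = k mod m \<Longrightarrow> (x + 1) mod m = (k + 1) mod m"
  by (metis mod_add_left_eq)

lemma mod_pred: "((x::int) - 1) mod m = k mod m \<Longrightarrow> x mod m = (k + 1) mod m"
  using mod_succ[of "x - 1" m k] by simp

lemma nat_y1: "n \<ge> 2 \<Longrightarrow> (x::int) mod int n = (int y + 1) mod int n \<Longrightarrow> nat (x mod int n) = (y + 1) mod n"
proof -
  assume n: "n \<ge> 2" and e: "x mod int n = (int y + 1) mod int n"
  have "int ((y + 1) mod n) = (int y + 1) mod int n" by (simp add: zmod_int add.commute)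
  then show ?thesis using e by simp
qed

definition hinv :: "nat \<Rightarrow> nat set \<Rightarrow> (int \<Rightarrow> int) \<Rightarrow> bool" where
  "hinv n A G = (\<forall>p. (inA n A (p - 1) \<longrightarrow> G p = p - 1) \<and>
      (\<not> inA n A (p - 1) \<longrightarrow> p \<le> G p \<and> \<not> inA n A (G p) \<and> (\<forall>c. p \<le> c \<and> c < G p \<longrightarrow> inA n A c)))"

lemma hinv_id: "hinv n {} id"
  unfolding hinv_def inA_def by simp

lemma hinv_step:
  assumes n: "n \<ge> 2" and y: "y < n" "y \<notin> A" "(y + 1) mod n \<notin> A" and h: "hinv n A G"
  shows "hinv n (insert y A) (sgen n y \<circ> G)"
proof -
  let ?s = "sgen n y"
  have ins: "\<And>c. inA n (insert y A) c = (inA n A c \<or> c mod int n = int y)"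
    using inA_insert[OF n] by blast
  have Ay: "\<And>c. inA n A c \<Longrightarrow> c mod int n \<noteq> int y" using y(2) unfolding inA_def by auto
  have Ay1: "\<And>c. inA n A c \<Longrightarrow> (c - 1) mod int n \<noteq> int y"
  proof
    fix c assume c: "inA n A c" and e: "(c - 1) mod int n = int y"
    have "c mod int n = (int y + 1) mod int n" using mod_pred[of c "int n" "int y"] e y(1) by simp
    then have "nat (c mod int n) = (y + 1) mod n" using nat_y1[OF n] by blast
    then show False using c y(3) unfolding inA_def by simp
  qed
  have sA: "\<And>c. inA n A c \<Longrightarrow> ?s c = c" using Ay Ay1 by (simp add: sgen_alt[OF n y(1)])
  have d: "\<And>x. (x + 1) mod int n \<noteq> x mod int n"
  proof
    fix x assume "(x + 1) mod int n = x mod int n"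
    then have "int n dvd 1" by (metis add_diff_cancel_left' mod_eq_dvd_iff)
    with n show False by simp
  qed
  have hp: "\<And>p. inA n A (p - 1) \<Longrightarrow> G p = p - 1"
    and hq: "\<And>p. \<not> inA n A (p - 1) \<Longrightarrow> p \<le> G p \<and> \<not> inA n A (G p) \<and> (\<forall>c. p \<le> c \<and> c < G p \<longrightarrow> inA n A c)"
    using h unfolding hinv_def by blast+
  have P1: "(?s \<circ> G) p = p - 1" if p: "inA n (insert y A) (p - 1)" for p
    proof (cases "inA n A (p - 1)")
      case True
      then show ?thesis using hp sA by simp
    next
      case False
      then have py: "(p - 1) mod int n = int y" using p ins by blast
      have pm: "p mod int n = (int y + 1) mod int n" using mod_pred[of p "int n" "int y"] py y(1) by simp
      have "\<not> inA n A p" unfolding inA_def using nat_y1[OF n pm] y(3) by simp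
      have "p \<le> G p" "\<forall>c. p \<le> c \<and> c < G p \<longrightarrow> inA n A c" using hq[OF False] by auto
      then have Gp: "G p = p" using \<open>\<not> inA n A p\<close> by (cases "G p = p") auto
      have "p mod int n \<noteq> int y" using d[of "p - 1"] py by simp
      then show ?thesis using Gp py by (simp add: sgen_alt[OF n y(1)])
    qed
  have P2: "p \<le> (?s \<circ> G) p \<and> \<not> inA n (insert y A) ((?s \<circ> G) p) \<and>
      (\<forall>c. p \<le> c \<and> c < (?s \<circ> G) p \<longrightarrow> inA n (insert y A) c)" if p: "\<not> inA n (insert y A) (p - 1)" for p
  proof -
    from p have pA: "\<not> inA n A (p - 1)" and py: "(p - 1) mod int n \<noteq> int y" using ins by auto
    define q where "q = G p"
    have q: "p \<le> q" "\<not> inA n A q" "\<forall>c. p \<le> c \<and> c < q \<longrightarrow> inA n A c" using hq[OF pA] unfolding q_def by auto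
    have goal: "p \<le> ?s q \<and> \<not> inA n (insert y A) (?s q) \<and> (\<forall>c. p \<le> c \<and> c < ?s q \<longrightarrow> inA n (insert y A) c)"
    proof (cases "q mod int n = int y")
      case True
      have sq: "?s q = q + 1" using True by (simp add: sgen_alt[OF n y(1)])
      have q1: "(q + 1) mod int n = (int y + 1) mod int n" using mod_succ[of q "int n" "int y"] True y(1) by simp
      have "\<not> inA n A (q + 1)" unfolding inA_def using nat_y1[OF n q1] y(3) by simp
      moreover have "(q + 1) mod int n \<noteq> int y" using d[of q] True by simp
      ultimately have "\<not> inA n (insert y A) (q + 1)" using ins by blast
      moreover have "\<forall>c. p \<le> c \<and> c < q + 1 \<longrightarrow> inA n (insert y A) c"
      proof (intro allI impI)
        fix c assume c: "p \<le> c \<and> c < q + 1"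
        show "inA n (insert y A) c"
        proof (cases "c = q")
          case True then show ?thesis using \<open>q mod int n = int y\<close> ins by blast
        next
          case False then show ?thesis using c q(3) ins by auto
        qed
      qed
      ultimately show ?thesis using sq q(1) by simp
    next
      case F1: False
      show ?thesis
      proof (cases "(q - 1) mod int n = int y")
        case True
        have "q \<noteq> p" using True py by auto
        then have "inA n A (q - 1)" using q by auto
        then show ?thesis using Ay True by blast
      next
        case False
        have sq: "?s q = q" using F1 False by (simp add: sgen_alt[OF n y(1)])
        have "\<not> inA n (insert y A) q" using q(2) F1 ins by blast
        then show ?thesis using sq q ins by auto
      qed
    qed
    then show ?thesis unfolding q_def by simp
  qed
  show ?thesis unfolding hinv_def using P1 P2 by blast
qed


lemma mod_2n: "(x::nat) < 2 * n \<Longrightarrow> x mod n = (if x < n then x else x - n)"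
  by (simp add: mod_if)

lemma hX_hinv:
  assumes n: "n \<ge> 2" and X: "X \<subset> {0..<n}"
  shows "hinv n X (hX n X)"
proof -
  define a where "a = Min ({0..<n} - X)"
  have ne: "{0..<n} - X \<noteq> {}" using X by blast
  have aX: "a \<in> {0..<n} - X" unfolding a_def using ne by (intro Min_in) auto
  then have an: "a < n" and anX: "a \<notin> X" by auto
  define f where "f = (\<lambda>k. (a + k) mod n)"
  define L where "L = (\<lambda>k. filter (\<lambda>x. x \<in> X) (map f [0..<k]))"
  have finj: "j = k" if "j < n" "k < n" "f j = f k" for j k
    using that an mod_2n[of "a + j" n] mod_2n[of "a + k" n] unfolding f_def
    by (auto split: if_splits)
  have fsuc: "(f k + 1) mod n \<notin> X \<inter> f ` {0..<k}" if k: "k < n" for k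
  proof
    assume "(f k + 1) mod n \<in> X \<inter> f ` {0..<k}"
    then obtain j where j: "j < k" "(f k + 1) mod n = f j" "f j \<in> X" by auto
    have e: "(f k + 1) mod n = (a + k + 1) mod n" unfolding f_def by (simp add: mod_Suc_eq add.commute)
    have "(a + k + 1) mod n = (a + j) mod n" using j(2) e unfolding f_def by simp
    then have "f j = a" using k j(1) an mod_2n[of "a + k + 1" n] mod_2n[of "a + j" n] unfolding f_def
      by (auto split: if_splits)
    then show False using j(3) anX by simp
  qed
  have ind: "k \<le> n \<longrightarrow> hinv n (X \<inter> f ` {0..<k}) (wprod n (rev (L k)))" for k
  proof (induction k)
    case 0 then show ?case unfolding L_def using hinv_id by (simp add: id_def)
  next
    case (Suc k)
    show ?case
    proof
      assume k: "Suc k \<le> n"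
      then have IH: "hinv n (X \<inter> f ` {0..<k}) (wprod n (rev (L k)))" using Suc.IH by simp
      have fkn: "f k < n" unfolding f_def using n by simp
      show "hinv n (X \<inter> f ` {0..<Suc k}) (wprod n (rev (L (Suc k))))"
      proof (cases "f k \<in> X")
        case True
        have LS: "L (Suc k) = L k @ [f k]" unfolding L_def using True by simp
        have SS: "X \<inter> f ` {0..<Suc k} = insert (f k) (X \<inter> f ` {0..<k})"
          using True by (auto simp: atLeast0_lessThan_Suc)
        have nin: "f k \<notin> X \<inter> f ` {0..<k}"
        proof
          assume "f k \<in> X \<inter> f ` {0..<k}"
          then obtain j where "j < k" "f k = f j" by auto
          then show False using finj[of j k] k by simp
        qed
        have "hinv n (insert (f k) (X \<inter> f ` {0..<k})) (sgen n (f k) \<circ> wprod n (rev (L k)))"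
          using hinv_step[OF n fkn nin fsuc IH] k by simp
        then show ?thesis unfolding LS SS by simp
      next
        case False
        have LS: "L (Suc k) = L k" unfolding L_def using False by simp
        have SS: "X \<inter> f ` {0..<Suc k} = X \<inter> f ` {0..<k}"
          using False by (auto simp: atLeast0_lessThan_Suc)
        show ?thesis unfolding LS SS using IH .
      qed
    qed
  qed
  have all: "X \<inter> f ` {0..<n} = X"
  proof
    show "X \<subseteq> X \<inter> f ` {0..<n}"
    proof
      fix x assume x: "x \<in> X"
      then have xn: "x < n" using X by auto
      define j where "j = (x + n - a) mod n"
      have "f j = (a + (x + n - a)) mod n" unfolding f_def j_def by (simp add: mod_add_right_eq)
      also have "\<dots> = x" using an xn by simp
      finally have "f j = x" .
      moreover have "j < n" unfolding j_def using n by simp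
      ultimately show "x \<in> X \<inter> f ` {0..<n}" using x by force
    qed
  qed auto
  have "hX n X = wprod n (rev (L n))" unfolding hX_def L_def f_def a_def by simp
  then show ?thesis using ind[of n] all by simp
qed


lemma key:
  assumes n: "n \<ge> 2" and a: "a < n" "a \<notin> J"
    and tauJ: "\<forall>c. inA n J c \<longrightarrow> inA n Y (c + 1)"
    and hY: "hinv n Y h" and bh: "bij h"
  shows "inA n J i \<longleftrightarrow> ((\<exists>x b. b < x \<and> rv n J (h x) = i \<and> rv n J (h b) = i + 1) \<and>
            rv n J (h (i + 2)) < rv n J (h (i + 1)))"
proof -
  let ?r = "rv n J"
  let ?w = "\<lambda>x. ?r (h x)"
  have rcut: "\<And>c p. \<not> inA n J c \<Longrightarrow> (p \<le> c) = (?r p \<le> c)" using rv_cut[OF n a] by blast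
  have rstep: "\<And>p. inA n J p \<Longrightarrow> ?r p = ?r (p + 1) + 1" using rv_step[OF n a] by blast
  have rinv: "\<And>p. ?r (?r p) = p" using rv_invol[OF n a] by blast
  have h1: "\<And>p. inA n Y (p - 1) \<Longrightarrow> h p = p - 1" using hY unfolding hinv_def by blast
  have h2: "\<And>p. \<not> inA n Y (p - 1) \<Longrightarrow> p \<le> h p \<and> \<not> inA n Y (h p) \<and> (\<forall>c. p \<le> c \<and> c < h p \<longrightarrow> inA n Y c)"
    using hY unfolding hinv_def by blast
  have hge: "\<And>p. p - 1 \<le> h p"
  proof -
    fix p show "p - 1 \<le> h p" using h1[of p] h2[of p] by (cases "inA n Y (p - 1)") auto
  qed
  have cutY: "\<And>c. \<not> inA n Y (c + 1) \<Longrightarrow> \<not> inA n J c" using tauJ by blast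
  have h1': "\<And>i. inA n Y i \<Longrightarrow> h (i + 1) = i" using h1 by (metis add_diff_cancel_right')
  have h2': "\<And>i. \<not> inA n Y i \<Longrightarrow> i + 1 \<le> h (i + 1) \<and> \<not> inA n Y (h (i + 1)) \<and> (\<forall>c. i + 1 \<le> c \<and> c < h (i + 1) \<longrightarrow> inA n Y c)"
    using h2 by (metis add_diff_cancel_right')
  have A: "\<exists>x b. b < x \<and> ?w x = i \<and> ?w b = i + 1" if J: "inA n J i"
  proof -
    define q where "q = ?r (i + 1)"
    have ri: "?r i = q + 1" using rstep[OF J] unfolding q_def by simp
    have qJ: "inA n J q"
    proof (rule ccontr)
      assume nq: "\<not> inA n J q"
      have "i + 1 \<le> q" using rcut[OF nq, of "i + 1"] unfolding q_def by simp
      moreover have "\<not> i \<le> q" using rcut[OF nq, of i] ri by simp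
      ultimately show False by simp
    qed
    have "inA n Y (q + 1)" using tauJ qJ by blast
    then have hq2: "h (q + 1 + 1) = q + 1" using h1' by blast
    have wx: "?w (q + 1 + 1) = i" using hq2 ri rinv[of i] by simp
    obtain b where b: "h b = q" using bij_pointE[OF bh, of q] by metis
    have wb: "?w b = i + 1" using b rinv[of "i + 1"] unfolding q_def by simp
    have "b < q + 1 + 1" using hge[of b] b by simp
    then show ?thesis using wx wb by blast
  qed
  have B: "?w (i + 2) < ?w (i + 1)" if J: "inA n J i"
  proof -
    have Y1: "inA n Y (i + 1)" using tauJ J by blast
    have "h (i + 1 + 1) = i + 1" using h1'[OF Y1] .
    then have w2: "?w (i + 2) = ?r (i + 1)" by (simp add: add.assoc)
    show ?thesis
    proof (cases "inA n Y i")
      case True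
      then have "h (i + 1) = i" using h1' by blast
      then show ?thesis using w2 rstep[OF J] by simp
    next
      case False
      from h2'[OF False] have hh: "i + 1 \<le> h (i + 1)" "\<not> inA n Y (h (i + 1))" by auto
      have ne: "h (i + 1) \<noteq> i + 1" using hh(2) Y1 by auto
      define c where "c = h (i + 1) - 1"
      have nc: "\<not> inA n J c" using cutY[of c] hh(2) unfolding c_def by simp
      have "?r (i + 1) \<le> c" using rcut[OF nc, of "i + 1"] hh(1) ne unfolding c_def by simp
      moreover have "\<not> ?r (h (i + 1)) \<le> c" using rcut[OF nc, of "h (i + 1)"] unfolding c_def by simp
      ultimately show ?thesis using w2 by simp
    qed
  qed
  have C: "inA n Y i \<and> \<not> inA n Y (i + 1)"
    if nJ: "\<not> inA n J i" and L: "\<exists>x b. b < x \<and> ?w x = i \<and> ?w b = i + 1"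
  proof (rule ccontr)
    assume neg: "\<not> (inA n Y i \<and> \<not> inA n Y (i + 1))"
    obtain x b where xb: "b < x" "?w x = i" "?w b = i + 1" using L by blast
    have hx: "h x \<le> i" using rcut[OF nJ, of "h x"] xb(2) by simp
    have hb: "\<not> h b \<le> i" using rcut[OF nJ, of "h b"] xb(3) by simp
    have xle: "x \<le> i + 1" using hge[of x] hx by simp
    show False
    proof (cases "inA n Y i")
      case False
      have "x \<noteq> i + 1" using h2'[OF False] hx by auto
      then have bi: "b < i" using xle xb(1) by simp
      show False
      proof (cases "inA n Y (b - 1)")
        case True then show False using h1[OF True] hb bi by simp
      next
        case F2: False
        have "inA n Y i" using h2[OF F2] bi hb by auto
        then show False using False by simp
      qed
    next
      case True
      then have Y1: "inA n Y (i + 1)" using neg by simp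
      have bi: "b \<le> i" using xle xb(1) by simp
      show False
      proof (cases "inA n Y (b - 1)")
        case True then show False using h1[OF True] hb bi by simp
      next
        case F2: False
        from h2[OF F2] have hh: "\<not> inA n Y (h b)" by auto
        have ne: "h b \<noteq> i + 1" using hh Y1 by auto
        define c where "c = h b - 1"
        have nc: "\<not> inA n J c" using cutY[of c] hh unfolding c_def by simp
        have "\<not> ?r (h b) \<le> c" using rcut[OF nc, of "h b"] unfolding c_def by simp
        then show False using xb(3) hb ne unfolding c_def by simp
      qed
    qed
  qed
  have D: "?w (i + 1) < ?w (i + 2)" if nY: "\<not> inA n Y (i + 1)"
  proof -
    from h2'[OF nY] have hh: "i + 1 + 1 \<le> h (i + 1 + 1)" "\<not> inA n Y (h (i + 1 + 1))" by auto
    define c where "c = h (i + 1 + 1) - 1"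
    have nc: "\<not> inA n J c" using cutY[of c] hh(2) unfolding c_def by simp
    have hi1: "h (i + 1) \<le> i + 1"
    proof (cases "inA n Y i")
      case True then show ?thesis using h1' by simp
    next
      case False
      from h2'[OF False] have "\<forall>c. i + 1 \<le> c \<and> c < h (i + 1) \<longrightarrow> inA n Y c" by blast
      then show ?thesis using nY by (meson not_le order_refl)
    qed
    have "?r (h (i + 1)) \<le> c" using rcut[OF nc, of "h (i + 1)"] hi1 hh(1) unfolding c_def by simp
    moreover have "\<not> ?r (h (i + 1 + 1)) \<le> c" using rcut[OF nc, of "h (i + 1 + 1)"] unfolding c_def by simp
    ultimately show ?thesis by (simp add: add.assoc)
  qed
  show ?thesis
  proof
    assume J: "inA n J i"
    show "(\<exists>x b. b < x \<and> ?w x = i \<and> ?w b = i + 1) \<and> ?w (i + 2) < ?w (i + 1)"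
      using A[OF J] B[OF J] by blast
  next
    assume R: "(\<exists>x b. b < x \<and> ?w x = i \<and> ?w b = i + 1) \<and> ?w (i + 2) < ?w (i + 1)"
    show "inA n J i"
    proof (rule ccontr)
      assume nJ: "\<not> inA n J i"
      have "\<not> inA n Y (i + 1)" using C[OF nJ] R by blast
      then show False using D R by fastforce
    qed
  qed
qed


lemma hX_bij: "n \<ge> 2 \<Longrightarrow> bij (hX n X)"
  unfolding hX_def Let_def by (rule wprod_bij) auto

lemma tau_inA:
  assumes n: "n \<ge> 2" and t: "tau n I \<subseteq> X"
  shows "\<forall>c. inA n I c \<longrightarrow> inA n X (c + 1)"
proof (intro allI impI)
  fix c assume c: "inA n I c"
  define k where "k = nat (c mod int n)"
  have kI: "k \<in> I" using c unfolding inA_def k_def .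
  then have "(k + 1) mod n \<in> X" using t unfolding tau_def by auto
  have ik: "int k = c mod int n" unfolding k_def using n by simp
  have "(c + 1) mod int n = (int k + 1) mod int n"
    using mod_succ[of c "int n" "int k"] ik by simp
  then have "nat ((c + 1) mod int n) = (k + 1) mod n" using nat_y1[OF n] by blast
  then show "inA n X (c + 1)" unfolding inA_def using \<open>(k + 1) mod n \<in> X\<close> by simp
qed

lemma inA_nat: "i < n \<Longrightarrow> inA n A (int i) = (i \<in> A)"
  unfolding inA_def by simp

lemma X_from_h:
  assumes h: "hinv n X G" and i: "i < n"
  shows "(i \<in> X) = (G (int i + 1) = int i)"
proof -
  have h1: "inA n X (int i) \<Longrightarrow> G (int i + 1) = int i" using h unfolding hinv_def
    by (metis add_diff_cancel_right')
  have h2: "\<not> inA n X (int i) \<Longrightarrow> int i + 1 \<le> G (int i + 1)" using h unfolding hinv_def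
    by (metis add_diff_cancel_right')
  show ?thesis using h1 h2 inA_nat[OF i, of X] by fastforce
qed

theorem lemma10p8:
  fixes n :: nat and I I' X X' :: "nat set"
  assumes "n \<ge> 2"
    and "I \<subset> {0..<n}" and "I' \<subset> {0..<n}"
    and "X \<subset> {0..<n}" and "X' \<subset> {0..<n}"
    and "tau n I \<subseteq> X" and "tau n I' \<subseteq> X'"
    and "longest n I \<circ> hX n X = longest n I' \<circ> hX n X'"
  shows "I = I' \<and> X = X'"
proof -
  note n = assms(1)
  obtain a where "a \<in> {0..<n} - I" using psubset_imp_ex_mem[OF assms(2)] by blast
  then have a: "a < n" "a \<notin> I" by auto
  obtain a' where "a' \<in> {0..<n} - I'" using psubset_imp_ex_mem[OF assms(3)] by blast
  then have a': "a' < n" "a' \<notin> I'" by auto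
  have L1: "longest n I = rv n I" using longest_eq[OF n a] assms(2) by blast
  have L2: "longest n I' = rv n I'" using longest_eq[OF n a'] assms(3) by blast
  have eq: "rv n I \<circ> hX n X = rv n I' \<circ> hX n X'" using assms(8) L1 L2 by simp
  have eqp: "\<And>x. rv n I (hX n X x) = rv n I' (hX n X' x)" using fun_cong[OF eq] by simp
  have k1: "\<And>i. inA n I i \<longleftrightarrow> ((\<exists>x b. b < x \<and> rv n I (hX n X x) = i \<and> rv n I (hX n X b) = i + 1) \<and>
            rv n I (hX n X (i + 2)) < rv n I (hX n X (i + 1)))"
    by (rule key[OF n a tau_inA[OF n assms(6)] hX_hinv[OF n assms(4)] hX_bij[OF n]])
  have k2: "\<And>i. inA n I' i \<longleftrightarrow> ((\<exists>x b. b < x \<and> rv n I' (hX n X' x) = i \<and> rv n I' (hX n X' b) = i + 1) \<and>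
            rv n I' (hX n X' (i + 2)) < rv n I' (hX n X' (i + 1)))"
    by (rule key[OF n a' tau_inA[OF n assms(7)] hX_hinv[OF n assms(5)] hX_bij[OF n]])
  have II: "I = I'"
  proof (rule set_eqI)
    fix i
    show "(i \<in> I) = (i \<in> I')"
    proof (cases "i < n")
      case True
      have "inA n I (int i) = inA n I' (int i)" using k1[of "int i"] k2[of "int i"] eqp by simp
      then show ?thesis using inA_nat[OF True] by simp
    next
      case False
      then show ?thesis using assms(2,3) by auto
    qed
  qed
  have hh: "hX n X = hX n X'"
  proof (rule ext)
    fix x
    have "rv n I (hX n X x) = rv n I (hX n X' x)" using eqp II by simp
    then show "hX n X x = hX n X' x" using rv_inj[OF n a] by (simp add: inj_eq)
  qed
  have XX: "X = X'"
  proof (rule set_eqI)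
    fix i
    show "(i \<in> X) = (i \<in> X')"
    proof (cases "i < n")
      case True
      show ?thesis using X_from_h[OF hX_hinv[OF n assms(4)] True] X_from_h[OF hX_hinv[OF n assms(5)] True] hh
        by simp
    next
      case False
      then show ?thesis using assms(4,5) by auto
    qed
  qed
  show ?thesis using II XX by simp
qed

end
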